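(* Let $t$ be a well-formed tree over $\tilde A_{i,k}$, $\Sigma$ a winning strategy of $P$ in $\mathcal G(t)$, $u\in\Sigma$, and $j$ a $P$-losing number. Suppose that for every strict prefix $w\prec u$ the label $t(w)$ is neither $\sim$ nor $p_{j'}$ with $j'<j$. Then $s(\varepsilon,\Sigma{\upharpoonright}u){\upharpoonright}j=s(u,\Sigma){\upharpoonright}j$.
   Context: Fix natural numbers $i<k$. Trees over a ranked alphabet are partial maps $t:\omega^*\to A$ with non-empty prefix-closed domain where a node with an $m$-ary label has exactly the children $u0,\ldots,u(m-1)$; $t{\upharpoonright}u$ is the subtree at $u$, $\preceq$ the prefix order. The alphabet $\tilde A_{i,k}$ has unary letters $p_i,\ldots,p_k$, a unary letter $\sim$, and binary letters $c_1,c_2$. Players $1,2$; $\bar P$ the opponent. Well-formed: no branch has infinitely many $\sim$. A node $u$ is switched if an odd number of strict prefixes $w\prec u$ have $t(w)=\sim$, kept otherwise. The game $\mathcal G(t)$: positions are nodes, moves to children, start at the root; $u$ is controlled by $P$ iff ($u$ kept and $t(u)=c_P$) or ($u$ switched and $t(u)=c_{\bar P}$). An infinite play is won by player 1 iff it is (eventually) kept and the least $j$ with infinitely many nodes labelled $p_j$ is even, or (eventually) switched and this $j$ is odd (take $j=k$ if none occurs infinitely often). A strategy of $P$ is a set $\Sigma\subseteq\mathrm{dom}(t)$ containing the root, prefix-closed, where each $u\in\Sigma$ controlled by $P$ has exactly one child in $\Sigma$ and every other $u\in\Sigma$ has all children in $\Sigma$; winning if every branch all of whose prefixes lie in $\Sigma$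 is won by $P$. For $u\in\Sigma$, $\Sigma{\upharpoonright}u=\{w:uw\in\Sigma\}$; when no strict prefix of $u$ is labelled $\sim$ it is a winning strategy of $P$ in $\mathcal G(t{\upharpoonright}u)$, and $s(\cdot,\Sigma{\upharpoonright}u)$ is computed with respect to $t{\upharpoonright}u$. $P$-losing numbers: $j\in\{i,\ldots,k\}$ odd for $P=1$, even for $P=2$; $i',k'$ least/largest. Tuples $(\theta_{i'},\theta_{i'+2},\ldots,\theta_{k'})$ of countable ordinals are ordered lexicographically (smaller index more significant), suprema in this order; $(\theta_{i'},\ldots,\theta_{k'}){\upharpoonright}j=(\theta_{i'},\ldots,\theta_j)$ for $P$-losing $j$. A node $u\in\Sigma$ is active if $t(u)=p_j$ for a $P$-losing $j$ and no strict prefix $w\prec u$ has $t(w)=\sim$ or $t(w)=p_{j'}$ with $j'<j$; $\mathrm{act}(\Sigma)$ is the set of active nodes. $u\gg w$ iff $u,w\in\Sigma$, $u\prec w$ and some $w'\in\mathrm{act}(\Sigma)$ has $u\preceq w'\preceq w$ (well-founded for winning $\Sigma$). $\mathrm{succ}_u(\Sigma)$ is the set of $\preceq$-minimal elements of $\{w\in\mathrm{act}(\Sigma):u\preceq w\}$. The map $s(\cdot,\Sigma)$ is defined by well-founded recursion along $\gg$: (a) if $u\in\mathrm{act}(\Sigma)$, $t(u)=p_j$ and $s(u0,\Sigma)=(\theta_{i'},\ldots,\theta_{k'})$, then $s(u,\Sigma)=(\theta_{i'},\ldots,\theta_{j-2},\theta_j+1,0,\ldots,0)$; (b) if $u\notin\mathrm{act}(\Sigma)$,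 then $s(u,\Sigma)=\sup_{w\in\mathrm{succ}_u(\Sigma)}s(w,\Sigma)$ (empty supremum $=(0,\ldots,0)$). *)

theory Defs
  imports Main "HOL-Library.Sublist" "HOL-Library.Countable_Set"
begin

datatype player = Pl1 | Pl2

fun opp :: "player \<Rightarrow> player" where
  "opp Pl1 = Pl2" | "opp Pl2 = Pl1"

text \<open>Letters of the ranked alphabet: Prio j = p_j (unary), Tilde = the letter ~ (unary),
  Choice P = c_P (binary).\<close>
datatype lab = Prio nat | Tilde | Choice player

fun arity :: "lab \<Rightarrow> nat" where
  "arity (Prio _) = 1" | "arity Tilde = 1" | "arity (Choice _) = 2"

type_synonym tree = "nat list \<Rightarrow> lab option"

definition tdom :: "tree \<Rightarrow> nat list set" where
  "tdom t = {u. t u \<noteq> None}"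

definition is_tree :: "nat \<Rightarrow> nat \<Rightarrow> tree \<Rightarrow> bool" where
  "is_tree i k t \<longleftrightarrow>
     tdom t \<noteq> {} \<and>
     (\<forall>u w. u \<in> tdom t \<longrightarrow> prefix w u \<longrightarrow> w \<in> tdom t) \<and>
     (\<forall>u a. t u = Some a \<longrightarrow> (\<forall>d. u @ [d] \<in> tdom t \<longleftrightarrow> d < arity a)) \<and>
     (\<forall>u j. t u = Some (Prio j) \<longrightarrow> i \<le> j \<and> j \<le> k)"

definition subtree :: "tree \<Rightarrow> nat list \<Rightarrow> tree" where
  "subtree t u = (\<lambda>w. t (u @ w))"

definition bnode :: "(nat \<Rightarrow> nat) \<Rightarrow> nat \<Rightarrow> nat list" where
  "bnode \<beta> n = map \<beta> [0..<n]"

definition is_branch :: "tree \<Rightarrow> (nat \<Rightarrow> nat) \<Rightarrow> bool" where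
  "is_branch t \<beta> \<longleftrightarrow> (\<forall>n. bnode \<beta> n \<in> tdom t)"

definition well_formed :: "tree \<Rightarrow> bool" where
  "well_formed t \<longleftrightarrow> (\<forall>\<beta>. is_branch t \<beta> \<longrightarrow> finite {n. t (bnode \<beta> n) = Some Tilde})"

definition switched :: "tree \<Rightarrow> nat list \<Rightarrow> bool" where
  "switched t u \<longleftrightarrow> odd (card {w. strict_prefix w u \<and> t w = Some Tilde})"

definition controlled :: "tree \<Rightarrow> player \<Rightarrow> nat list \<Rightarrow> bool" where
  "controlled t P u \<longleftrightarrow>
     (\<not> switched t u \<and> t u = Some (Choice P)) \<or> (switched t u \<and> t u = Some (Choice (opp P)))"

definition ev_kept :: "tree \<Rightarrow> (nat \<Rightarrow> nat) \<Rightarrow> bool" where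
  "ev_kept t \<beta> \<longleftrightarrow> (\<exists>N. \<forall>n\<ge>N. \<not> switched t (bnode \<beta> n))"

definition ev_switched :: "tree \<Rightarrow> (nat \<Rightarrow> nat) \<Rightarrow> bool" where
  "ev_switched t \<beta> \<longleftrightarrow> (\<exists>N. \<forall>n\<ge>N. switched t (bnode \<beta> n))"

definition inf_prio :: "nat \<Rightarrow> tree \<Rightarrow> (nat \<Rightarrow> nat) \<Rightarrow> nat" where
  "inf_prio k t \<beta> =
     (if \<exists>j. infinite {n. t (bnode \<beta> n) = Some (Prio j)}
      then LEAST j. infinite {n. t (bnode \<beta> n) = Some (Prio j)} else k)"

definition won_by_1 :: "nat \<Rightarrow> tree \<Rightarrow> (nat \<Rightarrow> nat) \<Rightarrow> bool" where
  "won_by_1 k t \<beta> \<longleftrightarrow>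
     (ev_kept t \<beta> \<and> even (inf_prio k t \<beta>)) \<or> (ev_switched t \<beta> \<and> odd (inf_prio k t \<beta>))"

definition won_by :: "nat \<Rightarrow> player \<Rightarrow> tree \<Rightarrow> (nat \<Rightarrow> nat) \<Rightarrow> bool" where
  "won_by k P t \<beta> \<longleftrightarrow> (if P = Pl1 then won_by_1 k t \<beta> else \<not> won_by_1 k t \<beta>)"

definition strategy :: "player \<Rightarrow> tree \<Rightarrow> nat list set \<Rightarrow> bool" where
  "strategy P t S \<longleftrightarrow>
     S \<subseteq> tdom t \<and> [] \<in> S \<and> (\<forall>u w. u \<in> S \<longrightarrow> prefix w u \<longrightarrow> w \<in> S) \<and>
     (\<forall>u\<in>S. if controlled t P u
              then (\<exists>!d. u @ [d] \<in> S)
              else (\<forall>d. u @ [d] \<in> tdom t \<longrightarrow> u @ [d] \<in> S))"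

definition winning_strategy :: "nat \<Rightarrow> player \<Rightarrow> tree \<Rightarrow> nat list set \<Rightarrow> bool" where
  "winning_strategy k P t S \<longleftrightarrow>
     strategy P t S \<and> (\<forall>\<beta>. (\<forall>n. bnode \<beta> n \<in> S) \<longrightarrow> won_by k P t \<beta>)"

definition restr :: "nat list set \<Rightarrow> nat list \<Rightarrow> nat list set" where
  "restr S u = {w. u @ w \<in> S}"

definition losing :: "nat \<Rightarrow> nat \<Rightarrow> player \<Rightarrow> nat \<Rightarrow> bool" where
  "losing i k P j \<longleftrightarrow> i \<le> j \<and> j \<le> k \<and> (if P = Pl1 then odd j else even j)"

definition lmin :: "nat \<Rightarrow> nat \<Rightarrow> player \<Rightarrow> nat" where
  "lmin i k P = (LEAST j. losing i k P j)"

definition lmax :: "nat \<Rightarrow> nat \<Rightarrow> player \<Rightarrow> nat" where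
  "lmax i k P = (GREATEST j. losing i k P j)"

text \<open>Tuples (theta_i', theta_i'+2, ..., theta_k') are lists; the entry of index j sits at position lpos j.\<close>
definition lpos :: "nat \<Rightarrow> nat \<Rightarrow> player \<Rightarrow> nat \<Rightarrow> nat" where
  "lpos i k P j = (j - lmin i k P) div 2"

definition tlen :: "nat \<Rightarrow> nat \<Rightarrow> player \<Rightarrow> nat" where
  "tlen i k P = lpos i k P (lmax i k P) + 1"

definition trunc :: "nat \<Rightarrow> nat \<Rightarrow> player \<Rightarrow> nat \<Rightarrow> 'o list \<Rightarrow> 'o list" where
  "trunc i k P j \<theta> = take (lpos i k P j + 1) \<theta>"

text \<open>Ordinals are modelled by a well-ordered type.\<close>
definition ozero :: "'o::wellorder" where
  "ozero = (LEAST x. True)"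

definition osuc :: "'o::wellorder \<Rightarrow> 'o" where
  "osuc x = (LEAST y. x < y)"

definition tle :: "'o::wellorder list \<Rightarrow> 'o list \<Rightarrow> bool" where
  "tle xs ys \<longleftrightarrow> xs = ys \<or> (xs, ys) \<in> lexord {(a, b). a < b}"

definition tsup :: "nat \<Rightarrow> 'o::wellorder list set \<Rightarrow> 'o list" where
  "tsup m X =
     (if X = {} then replicate m ozero
      else THE x. length x = m \<and> (\<forall>y\<in>X. tle y x) \<and>
                  (\<forall>z. length z = m \<and> (\<forall>y\<in>X. tle y z) \<longrightarrow> tle x z))"

definition active :: "nat \<Rightarrow> nat \<Rightarrow> player \<Rightarrow> tree \<Rightarrow> nat list set \<Rightarrow> nat list \<Rightarrow> bool" where
  "active i k P t S u \<longleftrightarrow> u \<in> S \<and>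
     (\<exists>j. t u = Some (Prio j) \<and> losing i k P j \<and>
          (\<forall>w. strict_prefix w u \<longrightarrow> t w \<noteq> Some Tilde \<and> (\<forall>j'<j. t w \<noteq> Some (Prio j'))))"

definition gg :: "nat \<Rightarrow> nat \<Rightarrow> player \<Rightarrow> tree \<Rightarrow> nat list set \<Rightarrow> nat list \<Rightarrow> nat list \<Rightarrow> bool" where
  "gg i k P t S u w \<longleftrightarrow> u \<in> S \<and> w \<in> S \<and> strict_prefix u w \<and>
     (\<exists>w'. active i k P t S w' \<and> prefix u w' \<and> prefix w' w)"

definition succs :: "nat \<Rightarrow> nat \<Rightarrow> player \<Rightarrow> tree \<Rightarrow> nat list set \<Rightarrow> nat list \<Rightarrow> nat list set" where
  "succs i k P t S u =
     {w. active i k P t S w \<and> prefix u w \<and>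
         \<not> (\<exists>w'. active i k P t S w' \<and> prefix u w' \<and> strict_prefix w' w)}"

definition sval :: "nat \<Rightarrow> nat \<Rightarrow> player \<Rightarrow> tree \<Rightarrow> nat list set \<Rightarrow> nat list \<Rightarrow> 'o::wellorder list" where
  "sval i k P t S =
     wfrec {(w, u). gg i k P t S u w}
       (\<lambda>f u. if active i k P t S u then
                (case t u of
                   Some (Prio j) \<Rightarrow>
                     (let \<theta> = f (u @ [0]); p = lpos i k P j
                      in take p \<theta> @ [osuc (\<theta> ! p)] @ replicate (tlen i k P - p - 1) ozero)
                 | _ \<Rightarrow> undefined)
              else tsup (tlen i k P) (f ` succs i k P t S u))"

end

theory Submission
  imports Defs
begin

abbreviation ltR :: "('o::wellorder \<times> 'o) set" where "ltR \<equiv> {(a,b). a < b}"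

lemma trans_ltR: "trans (ltR :: ('o::wellorder \<times> 'o) set)"
  by (auto simp: trans_def)

lemma tle_refl: "tle x x" by (simp add: tle_def)

lemma tle_trans: "tle x y \<Longrightarrow> tle y z \<Longrightarrow> tle (x::'o::wellorder list) z"
  unfolding tle_def using lexord_trans[OF _ _ trans_ltR] by blast

lemma lex_irr: "(x::'o::wellorder list, x) \<notin> lexord ltR"
  by (rule lexord_irreflexive) simp

lemma tle_strict: "tle x y \<Longrightarrow> (y, x) \<in> lexord ltR \<Longrightarrow> False"
  for x y :: "'o::wellorder list"
  unfolding tle_def using lexord_trans[OF _ _ trans_ltR] lex_irr by blast

lemma tle_antisym: "tle x y \<Longrightarrow> tle y x \<Longrightarrow> x = (y::'o::wellorder list)"
  using tle_strict unfolding tle_def by blast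

lemma tle_total: "tle x y \<or> tle y (x::'o::wellorder list)"
proof -
  have "total (ltR :: ('o \<times> 'o) set)" by (auto simp: total_on_def)
  then have "total (lexord (ltR :: ('o \<times> 'o) set))" by (rule total_lexord)
  then show ?thesis unfolding tle_def total_on_def by blast
qed

lemma tle_not: "\<not> tle x y \<Longrightarrow> (y, x) \<in> lexord ltR" for x y :: "'o::wellorder list"
  using tle_total[of x y] unfolding tle_def by auto

definition islub :: "nat \<Rightarrow> 'o::wellorder list set \<Rightarrow> 'o list \<Rightarrow> bool" where
  "islub m X z \<longleftrightarrow> length z = m \<and> (\<forall>y\<in>X. tle y z) \<and>
     (\<forall>z'. length z' = m \<and> (\<forall>y\<in>X. tle y z') \<longrightarrow> tle z z')"

lemma lub_unique: "islub m X z1 \<Longrightarrow> islub m X z2 \<Longrightarrow> z1 = z2"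
  unfolding islub_def using tle_antisym by blast

lemma ozero_le: "ozero \<le> (x::'o::wellorder)"
  unfolding ozero_def by (rule Least_le) simp

lemma rep_least: "length z = m \<Longrightarrow> tle (replicate m ozero) (z::'o::wellorder list)"
proof (induction m arbitrary: z)
  case 0 then show ?case by (simp add: tle_def)
next
  case (Suc m)
  then obtain h r where z: "z = h # r" "length r = m" by (cases z) auto
  have "ozero \<le> h" by (rule ozero_le)
  moreover have "tle (replicate m ozero) r" using Suc z by simp
  ultimately show ?case using z unfolding tle_def by (auto simp: order_le_less)
qed

lemma ub_exists:
  assumes bdd: "\<forall>X::'o::wellorder set. countable X \<longrightarrow> (\<exists>b. \<forall>x\<in>X. x \<le> b)"
    and nomax: "\<forall>x::'o. \<exists>y. x < y"
    and X: "countable X" "\<forall>y\<in>X. length y = m"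
  shows "\<exists>z. length z = m \<and> (\<forall>y\<in>X. tle y (z::'o list))"
proof (cases m)
  case 0
  have "tle y []" if "y \<in> X" for y using X(2) that 0 by (simp add: tle_def)
  then show ?thesis using 0 by (intro exI[of _ "[]"]) simp
next
  case (Suc m')
  have "countable (hd ` X)" using X by simp
  then obtain b where b: "\<forall>x\<in>hd ` X. x \<le> b" using bdd by blast
  obtain c where c: "b < c" using nomax by blast
  have "tle y (c # replicate m' ozero)" if "y \<in> X" for y
  proof -
    have "length y = Suc m'" using X(2) that Suc by simp
    then obtain h r where y: "y = h # r" by (cases y) auto
    have "hd y \<in> hd ` X" using that by (rule imageI)
    then have "hd y \<le> b" using b by blast
    then have "h < c" using y c by simp
    then show ?thesis using y by (simp add: tle_def)
  qed
  then show ?thesis using Suc by (intro exI[of _ "c # replicate m' ozero"]) simp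
qed

lemma lub_exists:
  assumes bdd: "\<forall>X::'o::wellorder set. countable X \<longrightarrow> (\<exists>b. \<forall>x\<in>X. x \<le> b)"
    and nomax: "\<forall>x::'o. \<exists>y. x < y"
    and X: "countable X" "\<forall>y\<in>X. length y = m"
  shows "\<exists>z. islub m X (z::'o list)"
proof -
  define U where "U = {z. length z = m \<and> (\<forall>y\<in>X. tle y (z::'o list))}"
  obtain z0 where "z0 \<in> U" using ub_exists[OF bdd nomax X] U_def by blast
  have wfl: "wf (lex (ltR :: ('o \<times> 'o) set))" by (intro wf_lex wf)
  obtain z where z: "z \<in> U" and zmin: "\<And>z'. (z', z) \<in> lex ltR \<Longrightarrow> z' \<notin> U"
    using wfE_min[OF wfl \<open>z0 \<in> U\<close>] by blast
  have "tle z z'" if "z' \<in> U" for z'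
  proof (rule ccontr)
    assume "\<not> tle z z'"
    then have "(z', z) \<in> lexord ltR" by (rule tle_not)
    moreover have "length z' = length z" using that z U_def by simp
    ultimately have "(z', z) \<in> lex ltR" by (simp add: lexord_lex)
    then show False using zmin that by blast
  qed
  then show ?thesis using z unfolding islub_def U_def by blast
qed

lemma tsup_eq:
  assumes "\<forall>y\<in>X. length y = m" "islub m X z"
  shows "tsup m X = (z::'o::wellorder list)"
proof (cases "X = {}")
  case True
  have "tle (replicate m ozero) z" using assms(2) rep_least islub_def by blast
  moreover have "tle z (replicate m ozero)" using assms(2) True unfolding islub_def by simp
  ultimately show ?thesis using True tle_antisym by (simp add: tsup_def)
next
  case False
  show ?thesis unfolding tsup_def using False
    apply simp
    apply (rule the_equality)
    using assms(2) unfolding islub_def apply blast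
    using assms(2) unfolding islub_def using tle_antisym by blast
qed

lemma tsup_lub:
  assumes bdd: "\<forall>X::'o::wellorder set. countable X \<longrightarrow> (\<exists>b. \<forall>x\<in>X. x \<le> b)"
    and nomax: "\<forall>x::'o. \<exists>y. x < y"
    and X: "countable X" "\<forall>y\<in>X. length y = m"
  shows "islub m X (tsup m X :: 'o list)"
  using lub_exists[OF bdd nomax X] tsup_eq[OF X(2)] by metis

lemma lub_single: "length x = m \<Longrightarrow> islub m {x} x"
  unfolding islub_def by (auto simp: tle_def)

lemma lub_union:
  assumes A: "\<forall>a\<in>A. islub n (Y a) (z a)" and B: "islub n (z ` A) Z"
  shows "islub n (\<Union>a\<in>A. Y a) Z"
proof -
  have l: "length Z = n" using B by (simp add: islub_def)
  have ub: "tle y Z" if yin: "y \<in> (\<Union>a\<in>A. Y a)" for y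
  proof -
    obtain a where a: "a \<in> A" "y \<in> Y a" using yin by blast
    then have "tle y (z a)" using A by (simp add: islub_def)
    moreover have "tle (z a) Z" using B a by (simp add: islub_def)
    ultimately show "tle y Z" by (rule tle_trans)
  qed
  have le: "tle Z z'" if z': "length z' = n" "\<forall>y\<in>(\<Union>a\<in>A. Y a). tle y z'" for z'
  proof -
    have "tle (z a) z'" if "a \<in> A" for a
    proof -
      have "islub n (Y a) (z a)" using A that by blast
      moreover have "\<forall>y\<in>Y a. tle y z'" using z'(2) that by blast
      ultimately show ?thesis using z'(1) by (simp add: islub_def)
    qed
    then have "\<forall>y\<in>z ` A. tle y z'" by blast
    then show ?thesis using B z'(1) by (simp add: islub_def)
  qed
  show ?thesis unfolding islub_def using l ub le by blast
qed

lemma take_mono: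
  assumes "length y = length z" "tle y z"
  shows "tle (take n y) (take n (z::'o::wellorder list))"
proof (cases "y = z")
  case True then show ?thesis by (simp add: tle_def)
next
  case False
  then have "(y, z) \<in> lexord ltR" using assms tle_def by blast
  then obtain i where i: "i < length y" "take i y = take i z" "y ! i < z ! i"
    using assms(1) unfolding lexord_take_index_conv by auto
  show ?thesis
  proof (cases "i < n")
    case True
    have "(take n y, take n z) \<in> lexord ltR"
      unfolding lexord_take_index_conv using i True assms(1)
      by (intro disjI2 exI[of _ i]) (auto simp: min_def)
    then show ?thesis by (simp add: tle_def)
  next
    case False
    then have "take n y = take n z" using i(2)
      by (metis min.absorb1 not_less take_take)
    then show ?thesis by (simp add: tle_def)
  qed
qed

lemma lub_take:
  assumes bdd: "\<forall>X::'o::wellorder set. countable X \<longrightarrow> (\<exists>b. \<forall>x\<in>X. x \<le> b)"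
    and nomax: "\<forall>x::'o. \<exists>y. x < y"
    and X: "countable X" "\<forall>y\<in>X. length y = m" and nm: "n \<le> m" and z: "islub m X (z::'o list)"
  shows "islub n (take n ` X) (take n z)"
proof -
  have lz: "length z = m" using z islub_def by blast
  have ub: "\<forall>y\<in>take n ` X. tle y (take n z)"
    using z X take_mono lz unfolding islub_def by force
  have least: "tle (take n z) z'" if z': "length z' = n" "\<forall>y\<in>take n ` X. tle y z'" for z'
  proof (rule ccontr)
    assume "\<not> tle (take n z) z'"
    then have lt: "(z', take n z) \<in> lexord ltR" by (rule tle_not)
    define Y where "Y = (drop n) ` {y\<in>X. take n y = z'}"
    have "countable Y" unfolding Y_def using X by (auto intro: countable_subset)
    moreover have "\<forall>y\<in>Y. length y = m - n" unfolding Y_def using X by auto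
    ultimately obtain r where r: "length r = m - n" "\<forall>y\<in>Y. tle y r"
      using ub_exists[OF bdd nomax] by blast
    have "tle y (z' @ r)" if "y \<in> X" for y
    proof (cases "take n y = z'")
      case True
      then have "tle (drop n y) r" using r that Y_def by auto
      then have "tle (z' @ drop n y) (z' @ r)" unfolding tle_def
        using lexord_append_leftI by blast
      then show ?thesis using True by (metis append_take_drop_id)
    next
      case False
      then have "(take n y, z') \<in> lexord ltR" using z' that unfolding tle_def by auto
      then have "(take n y @ drop n y, z' @ r) \<in> lexord ltR"
        using z' X that nm by (intro lexord_sufI) auto
      then show ?thesis by (simp add: tle_def)
    qed
    then have "tle z (z' @ r)" using z r z' nm unfolding islub_def by auto
    moreover have "(z' @ r, take n z @ drop n z) \<in> lexord ltR"
      using lt z' lz nm by (intro lexord_sufI) auto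
    ultimately show False using tle_strict by simp
  qed
  show ?thesis unfolding islub_def using ub least lz nm by auto
qed


lemma ws_strat: "winning_strategy k P t S \<Longrightarrow> strategy P t S" by (simp add: winning_strategy_def)
lemma strat_pc: "strategy P t S \<Longrightarrow> x \<in> S \<Longrightarrow> prefix y x \<Longrightarrow> y \<in> S"
  unfolding strategy_def by (elim conjE) blast
lemma strat_sub: "strategy P t S \<Longrightarrow> S \<subseteq> tdom t"
  unfolding strategy_def by (elim conjE)
lemma strat_ch: "strategy P t S \<Longrightarrow> x \<in> S \<Longrightarrow> \<not> controlled t P x \<Longrightarrow> x @ [d] \<in> tdom t \<Longrightarrow> x @ [d] \<in> S"
  unfolding strategy_def by (elim conjE) (drule bspec, assumption, simp)

lemma prefix_nth': "prefix xs ys \<Longrightarrow> n < length xs \<Longrightarrow> xs ! n = ys ! n"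
  by (auto simp: prefix_def nth_append)

lemma sp_append_split:
  assumes sp: "strict_prefix x (u @ w)"
  shows "strict_prefix x u \<or> (\<exists>v. x = u @ v \<and> strict_prefix v w)"
proof -
  have p: "prefix x (u @ w)" and ne: "x \<noteq> u @ w" using sp by (auto simp: prefix_order.less_le)
  from p have "prefix x u \<or> (\<exists>us. x = u @ us \<and> prefix us w)" by (simp add: prefix_append)
  then show ?thesis
  proof
    assume xu: "prefix x u"
    show ?thesis
    proof (cases "x = u")
      case True
      then have "w \<noteq> []" using ne by simp
      then have "strict_prefix [] w" by (simp add: prefix_order.less_le)
      then show ?thesis using True by auto
    next
      case False then show ?thesis using xu by (simp add: prefix_order.less_le)
    qed
  next
    assume "\<exists>us. x = u @ us \<and> prefix us w"
    then obtain us where "x = u @ us" "prefix us w" by blast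
    then show ?thesis using ne by (auto simp: prefix_order.less_le)
  qed
qed

lemma chain_false:
  assumes win: "winning_strategy k P t S"
    and aS: "\<forall>n. a n \<in> S"
    and inc: "\<forall>n. strict_prefix (a n) (a (Suc n))"
    and lab: "\<forall>n. t (a n) = Some (Prio (jj n)) \<and> losing i k P (jj n)"
    and notil: "\<forall>n w. strict_prefix w (a n) \<longrightarrow> t w \<noteq> Some Tilde"
    and nolow: "\<forall>n w j'. strict_prefix w (a n) \<longrightarrow> prefix (a 0) w \<longrightarrow> j' < jj n \<longrightarrow> t w \<noteq> Some (Prio j')"
  shows False
proof -
  have strat: "strategy P t S" using win by (rule ws_strat)
  have pc: "\<And>x y. x \<in> S \<Longrightarrow> prefix y x \<Longrightarrow> y \<in> S" using strat strat_pc by blast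
  have pm: "prefix (a n) (a m)" if "n \<le> m" for n m
    using that
  proof (induction m rule: dec_induct)
    case base then show ?case by simp
  next
    case (step m) then show ?case using inc by (meson prefix_order.dual_order.strict_implies_order prefix_order.order_trans)
  qed
  have len: "n \<le> length (a n)" for n
  proof (induction n)
    case 0 then show ?case by simp
  next
    case (Suc n) then show ?case using prefix_length_less[of "a n" "a (Suc n)"] inc by simp
  qed
  have jjdec: "jj (Suc n) \<le> jj n" for n
  proof (rule ccontr)
    assume "\<not> jj (Suc n) \<le> jj n"
    then have "jj n < jj (Suc n)" by simp
    moreover have "prefix (a 0) (a n)" using pm by simp
    ultimately show False using nolow inc lab by blast
  qed
  have anti: "n \<le> m \<Longrightarrow> jj m \<le> jj n" for n m
    by (rule lift_Suc_antimono_le[of jj]) (use jjdec in auto)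
  obtain M where M: "\<forall>y. jj M \<le> jj y" using ex_has_least_nat[of "\<lambda>_. True" 0 jj] by blast
  define J where "J = jj M"
  have jjM: "n \<ge> M \<Longrightarrow> jj n = J" for n using anti M J_def by (metis le_antisym)
  define \<beta> where "\<beta> l = a (Suc l) ! l" for l
  have nth: "a m ! l = \<beta> l" if "l < length (a m)" for l m
  proof (cases "m \<le> Suc l")
    case True then show ?thesis using pm[OF True] that prefix_nth' \<beta>_def by metis
  next
    case False
    then have "prefix (a (Suc l)) (a m)" using pm by simp
    moreover have "l < length (a (Suc l))" using len[of "Suc l"] by simp
    ultimately show ?thesis using prefix_nth' \<beta>_def by metis
  qed
  have bn: "bnode \<beta> n = take n (a m)" if "n \<le> length (a m)" for n m
    unfolding bnode_def using that by (intro nth_equalityI) (auto simp: nth)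
  have bnS: "bnode \<beta> n \<in> S" for n
    using bn[OF len[of n]] aS pc take_is_prefix by metis
  have bnsp: "strict_prefix (bnode \<beta> n) (a (Suc n))" for n
  proof -
    have "Suc n \<le> length (a (Suc n))" by (rule len)
    then have "bnode \<beta> n = take n (a (Suc n))" using bn by simp
    moreover have "length (take n (a (Suc n))) < length (a (Suc n))"
      using \<open>Suc n \<le> _\<close> by simp
    ultimately show ?thesis using take_is_prefix[of n "a (Suc n)"] by (auto simp: prefix_order.less_le)
  qed
  have notsw: "\<not> switched t (bnode \<beta> n)" for n
  proof -
    have "\<forall>w. strict_prefix w (bnode \<beta> n) \<longrightarrow> t w \<noteq> Some Tilde"
    proof (intro allI impI)
      fix w assume "strict_prefix w (bnode \<beta> n)"
      then have "strict_prefix w (a (Suc n))" using bnsp[of n] by (rule prefix_order.less_trans)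
      then show "t w \<noteq> Some Tilde" using notil by blast
    qed
    then have e: "{w. strict_prefix w (bnode \<beta> n) \<and> t w = Some Tilde} = {}" by blast
    show ?thesis unfolding switched_def e by simp
  qed
  have evk: "ev_kept t \<beta>" unfolding ev_kept_def using notsw by blast
  have nevs: "\<not> ev_switched t \<beta>" unfolding ev_switched_def using notsw by blast
  have infJ: "infinite {n. t (bnode \<beta> n) = Some (Prio J)}"
  proof -
    have "\<exists>n\<ge>N. t (bnode \<beta> n) = Some (Prio J)" for N
    proof -
      have "bnode \<beta> (length (a (M + N))) = a (M + N)" using bn[of "length (a (M+N))" "M+N"] by simp
      moreover have "N \<le> length (a (M + N))" using len[of "M+N"] by simp
      ultimately show ?thesis using lab jjM[of "M+N"] by (intro exI[of _ "length (a (M + N))"]) auto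
    qed
    note ex = this
    show ?thesis
    proof
      assume "finite {n. t (bnode \<beta> n) = Some (Prio J)}"
      then obtain B where B: "\<forall>n\<in>{n. t (bnode \<beta> n) = Some (Prio J)}. n \<le> B"
        using finite_nat_set_iff_bounded_le by blast
      obtain n where "n \<ge> Suc B" "t (bnode \<beta> n) = Some (Prio J)" using ex by blast
      then show False using B by fastforce
    qed
  qed
  have finlow: "finite {n. t (bnode \<beta> n) = Some (Prio j')}" if "j' < J" for j'
  proof -
    have "{n. t (bnode \<beta> n) = Some (Prio j')} \<subseteq> {..<length (a 0)}"
    proof
      fix n assume n: "n \<in> {n. t (bnode \<beta> n) = Some (Prio j')}"
      show "n \<in> {..<length (a 0)}"
      proof (rule ccontr)
        assume "n \<notin> {..<length (a 0)}"
        then have nl: "length (a 0) \<le> n" by simp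
        have e: "bnode \<beta> n = take n (a (Suc n))" using bn len[of "Suc n"] by simp
        obtain zs where z: "a (Suc n) = a 0 @ zs" using pm[of 0 "Suc n"] prefixE by blast
        then have "bnode \<beta> n = a 0 @ take (n - length (a 0)) zs" using e nl by simp
        then have "prefix (a 0) (bnode \<beta> n)" by simp
        moreover have "J \<le> jj (Suc n)" using M J_def by simp
        then have "j' < jj (Suc n)" using that by linarith
        ultimately show False using nolow bnsp n by blast
      qed
    qed
    then show ?thesis by (rule finite_subset) simp
  qed
  have ip: "inf_prio k t \<beta> = J"
  proof -
    have "(LEAST j. infinite {n. t (bnode \<beta> n) = Some (Prio j)}) = J"
    proof (rule Least_equality)
      show "infinite {n. t (bnode \<beta> n) = Some (Prio J)}" by (rule infJ)
      fix y assume "infinite {n. t (bnode \<beta> n) = Some (Prio y)}"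
      then show "J \<le> y" using finlow not_less by blast
    qed
    then show ?thesis unfolding inf_prio_def using infJ by auto
  qed
  have lJ: "losing i k P J" using lab J_def by simp
  have wa: "\<forall>\<beta>. (\<forall>n. bnode \<beta> n \<in> S) \<longrightarrow> won_by k P t \<beta>"
    using win unfolding winning_strategy_def by (rule conjunct2)
  have wb: "won_by k P t \<beta>" using wa bnS by blast
  show False
  proof (cases P)
    case Pl1
    then have "odd J" using lJ unfolding losing_def by simp
    then have "\<not> won_by_1 k t \<beta>" unfolding won_by_1_def ip using nevs by simp
    then show False using wb Pl1 unfolding won_by_def by simp
  next
    case Pl2
    then have "even J" using lJ unfolding losing_def by simp
    then have "won_by_1 k t \<beta>" unfolding won_by_1_def ip using evk by simp
    then show False using wb Pl2 unfolding won_by_def by simp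
  qed
qed



lemma subtree_Nil[simp]: "subtree t [] = t" by (simp add: subtree_def)
lemma restr_Nil[simp]: "restr S [] = S" by (simp add: restr_def)

lemma active_sub_iff:
  "active i k P (subtree t u) (restr S u) w \<longleftrightarrow> u @ w \<in> S \<and>
     (\<exists>j. t (u @ w) = Some (Prio j) \<and> losing i k P j \<and>
          (\<forall>v. strict_prefix v w \<longrightarrow> t (u @ v) \<noteq> Some Tilde \<and> (\<forall>j'<j. t (u @ v) \<noteq> Some (Prio j'))))"
  by (simp add: active_def subtree_def restr_def)

lemma sp_app_left: "strict_prefix (u @ x) (u @ y) \<longleftrightarrow> strict_prefix x y"
  by (simp add: prefix_order.less_le)

lemma gg_wf:
  assumes win: "winning_strategy k P t S" and uS: "u \<in> S"
    and nt: "\<forall>w. strict_prefix w u \<longrightarrow> t w \<noteq> Some Tilde"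
  shows "wf {(x, y). gg i k P (subtree t u) (restr S u) y x}"
proof (rule ccontr)
  let ?A = "active i k P (subtree t u) (restr S u)"
  assume "\<not> wf {(x, y). gg i k P (subtree t u) (restr S u) y x}"
  then obtain f where f: "\<And>n. gg i k P (subtree t u) (restr S u) (f n) (f (Suc n))"
    unfolding wf_iff_no_infinite_down_chain by blast
  have "\<forall>n. \<exists>c. ?A c \<and> prefix (f n) c \<and> prefix c (f (Suc n))"
  proof
    fix n show "\<exists>c. ?A c \<and> prefix (f n) c \<and> prefix c (f (Suc n))"
      using f[of n] unfolding gg_def by blast
  qed
  then obtain c where c0: "\<forall>n. ?A (c n) \<and> prefix (f n) (c n) \<and> prefix (c n) (f (Suc n))"
    by (rule choice[THEN exE])
  then have c: "\<And>n. ?A (c n) \<and> prefix (f n) (c n) \<and> prefix (c n) (f (Suc n))" by blast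
  have "\<forall>n. \<exists>j. t (u @ c n) = Some (Prio j) \<and> losing i k P j \<and>
          (\<forall>v. strict_prefix v (c n) \<longrightarrow> t (u @ v) \<noteq> Some Tilde \<and> (\<forall>j'<j. t (u @ v) \<noteq> Some (Prio j')))"
  proof
    fix n show "\<exists>j. t (u @ c n) = Some (Prio j) \<and> losing i k P j \<and>
          (\<forall>v. strict_prefix v (c n) \<longrightarrow> t (u @ v) \<noteq> Some Tilde \<and> (\<forall>j'<j. t (u @ v) \<noteq> Some (Prio j')))"
      using c[of n] unfolding active_sub_iff by blast
  qed
  then obtain jj where jj0: "\<forall>n. t (u @ c n) = Some (Prio (jj n)) \<and> losing i k P (jj n) \<and>
          (\<forall>v. strict_prefix v (c n) \<longrightarrow> t (u @ v) \<noteq> Some Tilde \<and> (\<forall>j'<jj n. t (u @ v) \<noteq> Some (Prio j')))"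
    by (rule choice[THEN exE])
  then have jj: "\<And>n. t (u @ c n) = Some (Prio (jj n)) \<and> losing i k P (jj n) \<and>
          (\<forall>v. strict_prefix v (c n) \<longrightarrow> t (u @ v) \<noteq> Some Tilde \<and> (\<forall>j'<jj n. t (u @ v) \<noteq> Some (Prio j')))"
    by blast
  have cS: "u @ c n \<in> S" for n using c[of n] unfolding active_sub_iff by blast
  define a where "a n = u @ c (2 * n)" for n
  define jj2 where "jj2 n = jj (2 * n)" for n
  show False
  proof (rule chain_false[of k P t S a jj2 i])
    show "winning_strategy k P t S" by (rule win)
    show "\<forall>n. a n \<in> S" using cS a_def by simp
    show "\<forall>n. strict_prefix (a n) (a (Suc n))"
    proof
      fix n
      have 1: "prefix (c (2*n)) (f (Suc (2*n)))" using c by blast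
      have 2: "strict_prefix (f (Suc (2*n))) (f (Suc (Suc (2*n))))" using f[of "Suc (2*n)"] unfolding gg_def by blast
      have 3: "prefix (f (Suc (Suc (2*n)))) (c (Suc (Suc (2*n))))" using c by blast
      have "strict_prefix (c (2*n)) (f (Suc (Suc (2*n))))"
        using 1 2 by (rule prefix_order.le_less_trans)
      then have "strict_prefix (c (2*n)) (c (Suc (Suc (2*n))))"
        using 3 by (rule prefix_order.less_le_trans)
      moreover have "2 * Suc n = Suc (Suc (2*n))" by simp
      ultimately show "strict_prefix (a n) (a (Suc n))" unfolding a_def sp_app_left by simp
    qed
    show "\<forall>n. t (a n) = Some (Prio (jj2 n)) \<and> losing i k P (jj2 n)"
      using jj a_def jj2_def by simp
    show "\<forall>n w. strict_prefix w (a n) \<longrightarrow> t w \<noteq> Some Tilde"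
    proof (intro allI impI)
      fix n w assume "strict_prefix w (a n)"
      then have "strict_prefix w u \<or> (\<exists>v. w = u @ v \<and> strict_prefix v (c (2*n)))"
        unfolding a_def by (rule sp_append_split)
      then show "t w \<noteq> Some Tilde"
      proof
        assume "strict_prefix w u" then show ?thesis using nt by blast
      next
        assume "\<exists>v. w = u @ v \<and> strict_prefix v (c (2*n))"
        then obtain v where "w = u @ v" "strict_prefix v (c (2*n))" by blast
        then show ?thesis using jj[of "2*n"] by blast
      qed
    qed
    show "\<forall>n w j'. strict_prefix w (a n) \<longrightarrow> prefix (a 0) w \<longrightarrow> j' < jj2 n \<longrightarrow> t w \<noteq> Some (Prio j')"
    proof (intro allI impI)
      fix n w j' assume w: "strict_prefix w (a n)" "prefix (a 0) w" "j' < jj2 n"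
      have "strict_prefix w u \<or> (\<exists>v. w = u @ v \<and> strict_prefix v (c (2*n)))"
        using w(1) unfolding a_def by (rule sp_append_split)
      moreover have "\<not> strict_prefix w u"
      proof
        assume "strict_prefix w u"
        then have "length w < length u" by (rule prefix_length_less)
        moreover have "prefix (u @ c 0) w" using w(2) unfolding a_def by simp
        then have "length (u @ c 0) \<le> length w" by (rule prefix_length_le)
        then have "length u \<le> length w" by simp
        ultimately show False by simp
      qed
      ultimately obtain v where "w = u @ v" "strict_prefix v (c (2*n))" by blast
      then show "t w \<noteq> Some (Prio j')" using jj[of "2*n"] w(3) unfolding jj2_def by blast
    qed
  qed
qed

lemma child_sub:
  assumes tree: "is_tree i k t" and strat: "strategy P t S"
    and act: "active i k P (subtree t u) (restr S u) w"
  shows "w @ [0] \<in> restr S u"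
proof -
  obtain j where uw: "u @ w \<in> S" "t (u @ w) = Some (Prio j)" using act unfolding active_sub_iff by blast
  have ctl: "\<not> controlled t P (u @ w)" using uw unfolding controlled_def by simp
  have "\<forall>d. ((u @ w) @ [d] \<in> tdom t) = (d < arity (Prio j))"
    using tree uw(2) unfolding is_tree_def by blast
  then have "(u @ w) @ [0] \<in> tdom t" by simp
  then have "(u @ w) @ [0] \<in> S" using strat_ch[OF strat uw(1) ctl] by blast
  then show ?thesis unfolding restr_def by simp
qed

lemma pc_sub:
  assumes strat: "strategy P t S"
  shows "\<forall>x y. x \<in> restr S u \<longrightarrow> prefix y x \<longrightarrow> y \<in> restr S u"
proof (intro allI impI)
  fix x y assume x: "x \<in> restr S u" and y: "prefix y x"
  have "u @ x \<in> S" using x by (simp add: restr_def)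
  moreover have "prefix (u @ y) (u @ x)" using y by simp
  ultimately have "u @ y \<in> S" by (rule strat_pc[OF strat])
  then show "y \<in> restr S u" by (simp add: restr_def)
qed



definition stepf :: "nat \<Rightarrow> nat \<Rightarrow> player \<Rightarrow> nat \<Rightarrow> 'o::wellorder list \<Rightarrow> 'o list" where
  "stepf i k P j \<theta> = take (lpos i k P j) \<theta> @ [osuc (\<theta> ! lpos i k P j)] @ replicate (tlen i k P - lpos i k P j - 1) ozero"

lemma sval_eq:
  assumes wfR: "wf {(x, y). gg i k P t S y x}"
  shows "(sval i k P t S v :: 'o::wellorder list) =
    (if active i k P t S v then
       (case t v of Some (Prio j) \<Rightarrow> stepf i k P j (cut (sval i k P t S) {(x, y). gg i k P t S y x} v (v @ [0]))
        | _ \<Rightarrow> undefined)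
     else tsup (tlen i k P) (cut (sval i k P t S) {(x, y). gg i k P t S y x} v ` succs i k P t S v))"
  unfolding sval_def stepf_def
  by (subst wfrec[OF wfR]) (simp add: Let_def split: option.split lab.split)

lemma sval_act:
  assumes wfR: "wf {(x, y). gg i k P t S y x}" and act: "active i k P t S v"
    and ch: "v @ [0] \<in> S" and lab: "t v = Some (Prio j)"
  shows "(sval i k P t S v :: 'o::wellorder list) = stepf i k P j (sval i k P t S (v @ [0]))"
proof -
  have vS: "v \<in> S" using act active_def by blast
  have "gg i k P t S v (v @ [0])" unfolding gg_def
    using vS ch act by (auto simp: prefix_order.less_le)
  then show ?thesis using sval_eq[OF wfR, of v] act lab by (simp add: cut_apply)
qed

lemma succs_gg:
  assumes pc: "\<forall>x y. x \<in> S \<longrightarrow> prefix y x \<longrightarrow> y \<in> S"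
    and na: "\<not> active i k P t S v" and w: "w \<in> succs i k P t S v"
  shows "gg i k P t S v w"
proof -
  have aw: "active i k P t S w" and pw: "prefix v w" using w succs_def by blast+
  have wS: "w \<in> S" using aw active_def by blast
  then have vS: "v \<in> S" using pc pw by blast
  have "w \<noteq> v" using aw na by blast
  then have "strict_prefix v w" using pw by (simp add: prefix_order.less_le)
  then show ?thesis unfolding gg_def using vS wS aw pw by blast
qed

lemma sval_nact:
  assumes wfR: "wf {(x, y). gg i k P t S y x}" and na: "\<not> active i k P t S v"
    and pc: "\<forall>x y. x \<in> S \<longrightarrow> prefix y x \<longrightarrow> y \<in> S"
  shows "(sval i k P t S v :: 'o::wellorder list) = tsup (tlen i k P) (sval i k P t S ` succs i k P t S v)"
proof -
  have img: "cut (sval i k P t S) {(x, y). gg i k P t S y x} v ` succs i k P t S v = (sval i k P t S ` succs i k P t S v :: 'o list set)"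
    by (rule image_cong) (auto simp: cut_apply succs_gg[OF pc na])
  have "(sval i k P t S v :: 'o list) = tsup (tlen i k P) (cut (sval i k P t S) {(x, y). gg i k P t S y x} v ` succs i k P t S v)"
    using sval_eq[OF wfR, of v] na by simp
  then show ?thesis unfolding img .
qed

lemma lmin_le: "losing i k P j \<Longrightarrow> lmin i k P \<le> j"
  unfolding lmin_def by (rule Least_le)

lemma lmax_ge: "losing i k P j \<Longrightarrow> j \<le> lmax i k P"
  unfolding lmax_def by (rule Greatest_le_nat[where b = k]) (auto simp: losing_def)

lemma lpos_lt: "losing i k P j \<Longrightarrow> lpos i k P j < tlen i k P"
  unfolding tlen_def lpos_def using lmax_ge[of i k P j]
  by (simp add: div_le_mono diff_le_mono less_Suc_eq_le)

lemma lpos_strict: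
  assumes "losing i k P j" "losing i k P j'" "j < j'"
  shows "lpos i k P j < lpos i k P j'"
proof -
  have "j + 2 \<le> j'" using assms by (cases P) (auto simp: losing_def, presburger+)
  moreover have "lmin i k P \<le> j" using assms(1) by (rule lmin_le)
  ultimately have "(j - lmin i k P) + 2 \<le> j' - lmin i k P" by linarith
  then have "((j - lmin i k P) + 2) div 2 \<le> (j' - lmin i k P) div 2" by (rule div_le_mono)
  then show ?thesis unfolding lpos_def by simp
qed

lemma len_stepf:
  assumes "losing i k P j" "length \<theta> = tlen i k P"
  shows "length (stepf i k P j \<theta>) = tlen i k P"
  using lpos_lt[OF assms(1)] assms(2) unfolding stepf_def by simp

lemma sval_len:
  assumes bdd: "\<forall>X::'o::wellorder set. countable X \<longrightarrow> (\<exists>b. \<forall>x\<in>X. x \<le> b)"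
    and nomax: "\<forall>x::'o. \<exists>y. x < y"
    and wfR: "wf {(x, y). gg i k P t S y x}"
    and ch: "\<forall>v. active i k P t S v \<longrightarrow> v @ [0] \<in> S"
    and pc: "\<forall>x y. x \<in> S \<longrightarrow> prefix y x \<longrightarrow> y \<in> S"
  shows "length (sval i k P t S v :: 'o list) = tlen i k P"
  using wfR
proof (induction v rule: wf_induct_rule)
  case (less v)
  show ?case
  proof (cases "active i k P t S v")
    case True
    then obtain j where lab: "t v = Some (Prio j)" "losing i k P j" unfolding active_def by blast
    have vS: "v \<in> S" using True active_def by blast
    have c: "v @ [0] \<in> S" using ch True by blast
    have "gg i k P t S v (v @ [0])" unfolding gg_def
      using vS c True by (auto simp: prefix_order.less_le)
    then have "length (sval i k P t S (v @ [0]) :: 'o list) = tlen i k P" using less by blast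
    moreover have "(sval i k P t S v :: 'o list) = stepf i k P j (sval i k P t S (v @ [0]))"
      by (rule sval_act[OF wfR True c lab(1)])
    ultimately show ?thesis using len_stepf[OF lab(2)] by simp
  next
    case False
    have "\<forall>y\<in>(sval i k P t S ` succs i k P t S v :: 'o list set). length y = tlen i k P"
      using less succs_gg[OF pc False] by blast
    moreover have "countable (sval i k P t S ` succs i k P t S v :: 'o list set)" by simp
    ultimately have "islub (tlen i k P) (sval i k P t S ` succs i k P t S v) (tsup (tlen i k P) (sval i k P t S ` succs i k P t S v) :: 'o list)"
      using tsup_lub[OF bdd nomax] by blast
    moreover have "(sval i k P t S v :: 'o list) = tsup (tlen i k P) (sval i k P t S ` succs i k P t S v)"
      by (rule sval_nact[OF wfR False pc])
    ultimately show ?thesis by (simp add: islub_def)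
  qed
qed

lemma take_step_cong:
  assumes "take n x = take n y"
  shows "take n (take p x @ [f (x ! p)] @ R) = take n (take p y @ [f (y ! p)] @ R)"
proof (cases "x = y")
  case True then show ?thesis by simp
next
  case False
  have lx: "n \<le> length x"
  proof (rule ccontr)
    assume "\<not> n \<le> length x"
    then have "take n x = x" by simp
    then have e: "take n y = x" using assms by simp
    have "length (take n y) = length x" using e by simp
    then have "min n (length y) = length x" by simp
    then have "length y \<le> n" using \<open>\<not> n \<le> length x\<close> by linarith
    then have "take n y = y" by simp
    then show False using False e by simp
  qed
  have ly: "n \<le> length y"
  proof (rule ccontr)
    assume "\<not> n \<le> length y"
    then have "take n y = y" by simp
    then have e: "take n x = y" using assms by simp
    have "length (take n x) = length y" using e by simp
    then have "min n (length x) = length y" by simp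
    then have "length x \<le> n" using \<open>\<not> n \<le> length y\<close> by linarith
    then have "take n x = x" by simp
    then show False using False e by simp
  qed
  show ?thesis
  proof (cases "p < n")
    case True
    have "take p x = take p y" using assms True
      by (metis min.absorb1 less_imp_le take_take)
    moreover have "x ! p = y ! p" using assms True lx ly
      by (metis nth_take)
    ultimately show ?thesis by simp
  next
    case False
    then have "take n (take p x @ [f (x ! p)] @ R) = take n x" using lx by (simp add: min_def)
    moreover have "take n (take p y @ [f (y ! p)] @ R) = take n y" using ly False by (simp add: min_def)
    ultimately show ?thesis using assms by simp
  qed
qed

lemma take_stepf_cong:
  "take n x = take n y \<Longrightarrow> take n (stepf i k P j x) = take n (stepf i k P j y)"
  unfolding stepf_def by (rule take_step_cong)

lemma take_stepf_high:
  assumes "n \<le> lpos i k P j" "lpos i k P j \<le> length \<theta>"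
  shows "take n (stepf i k P j \<theta>) = take n \<theta>"
  using assms unfolding stepf_def by (simp add: min_def)



lemma sp_prefix_eq:
  assumes "strict_prefix w' (v @ [d])" "prefix v w'"
  shows "w' = v"
proof -
  have "length w' < length v + 1" using prefix_length_less[OF assms(1)] by simp
  moreover have "length v \<le> length w'" using prefix_length_le[OF assms(2)] .
  ultimately have "length v = length w'" by simp
  obtain zs where "w' = v @ zs" using assms(2) by (rule prefixE)
  then show ?thesis using \<open>length v = length w'\<close> by simp
qed

lemma succs_act:
  assumes act: "active i k P t S v"
  shows "succs i k P t S v = {v}"
proof
  show "succs i k P t S v \<subseteq> {v}"
  proof
    fix w assume w: "w \<in> succs i k P t S v"
    then have pw: "prefix v w" and mn: "\<not> (\<exists>w'. active i k P t S w' \<and> prefix v w' \<and> strict_prefix w' w)"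
      unfolding succs_def by blast+
    show "w \<in> {v}"
    proof (rule ccontr)
      assume "w \<notin> {v}"
      then have "strict_prefix v w" using pw by (simp add: prefix_order.less_le)
      then show False using mn act by blast
    qed
  qed
  show "{v} \<subseteq> succs i k P t S v"
  proof -
    have "\<not> (\<exists>w'. active i k P t S w' \<and> prefix v w' \<and> strict_prefix w' v)"
    proof
      assume "\<exists>w'. active i k P t S w' \<and> prefix v w' \<and> strict_prefix w' v"
      then obtain w' where "prefix v w'" "strict_prefix w' v" by blast
      then have "length v \<le> length w'" "length w' < length v"
        using prefix_length_le prefix_length_less by blast+
      then show False by simp
    qed
    then show ?thesis unfolding succs_def using act by blast
  qed
qed

lemma unary_child:
  assumes tree: "is_tree i k t" and sub: "S \<subseteq> tdom t" and lab: "t v = Some (Prio j0)"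
    and wS: "w \<in> S" and sp: "strict_prefix v w"
  shows "prefix (v @ [0]) w"
proof -
  have pvw: "prefix v w" and nvw: "v \<noteq> w" using sp by (simp_all add: prefix_order.less_le)
  obtain zs where w: "w = v @ zs" using pvw by (rule prefixE)
  have zs: "zs \<noteq> []" using w nvw by auto
  obtain d r where zs2: "zs = d # r" using zs by (cases zs) auto
  have "w \<in> tdom t" using wS sub by blast
  moreover have "prefix (v @ [d]) w" using w zs2 by simp
  ultimately have "v @ [d] \<in> tdom t" using tree unfolding is_tree_def by blast
  moreover have "\<forall>d. (v @ [d] \<in> tdom t) = (d < arity (Prio j0))" using tree lab unfolding is_tree_def by blast
  ultimately have "d = 0" by simp
  then show ?thesis using w zs2 by simp
qed

lemma succs_unary:
  assumes tree: "is_tree i k t" and sub: "S \<subseteq> tdom t" and lab: "t v = Some (Prio j0)"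
    and na: "\<not> active i k P t S v"
  shows "succs i k P t S v = (if active i k P t S (v @ [0]) then {v @ [0]} else succs i k P t S (v @ [0]))"
proof -
  have key: "prefix (v @ [0]) w" if "active i k P t S w" "prefix v w" for w
  proof -
    have "w \<noteq> v" using that na by blast
    then have sp: "strict_prefix v w" using that(2) by (simp add: prefix_order.less_le)
    have wS: "w \<in> S" using that(1) active_def by blast
    show ?thesis by (rule unary_child[OF tree sub lab wS sp])
  qed
  have pv0: "prefix v (v @ [0])" by simp
  show ?thesis
  proof (cases "active i k P t S (v @ [0])")
    case True
    have "succs i k P t S v = {v @ [0]}"
    proof
      show "succs i k P t S v \<subseteq> {v @ [0]}"
      proof
        fix w assume w: "w \<in> succs i k P t S v"
        then have aw: "active i k P t S w" and pw: "prefix v w"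
          and mn: "\<not> (\<exists>w'. active i k P t S w' \<and> prefix v w' \<and> strict_prefix w' w)"
          unfolding succs_def by blast+
        have p0: "prefix (v @ [0]) w" using key[OF aw pw] .
        show "w \<in> {v @ [0]}"
        proof (rule ccontr)
          assume "w \<notin> {v @ [0]}"
          then have "strict_prefix (v @ [0]) w" using p0 by (simp add: prefix_order.less_le)
          then have "active i k P t S (v @ [0]) \<and> prefix v (v @ [0]) \<and> strict_prefix (v @ [0]) w"
            using True pv0 by simp
          then show False using mn by blast
        qed
      qed
      show "{v @ [0]} \<subseteq> succs i k P t S v"
      proof -
        have "\<not> (\<exists>w'. active i k P t S w' \<and> prefix v w' \<and> strict_prefix w' (v @ [0]))"
        proof
          assume "\<exists>w'. active i k P t S w' \<and> prefix v w' \<and> strict_prefix w' (v @ [0])"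
          then obtain w' where w': "active i k P t S w'" "prefix v w'" "strict_prefix w' (v @ [0])" by blast
          have "w' = v" using sp_prefix_eq[OF w'(3) w'(2)] .
          then show False using w'(1) na by simp
        qed
        then show ?thesis unfolding succs_def using True pv0 by blast
      qed
    qed
    then show ?thesis using True by simp
  next
    case False
    have "succs i k P t S v = succs i k P t S (v @ [0])"
    proof
      show "succs i k P t S v \<subseteq> succs i k P t S (v @ [0])"
      proof
        fix w assume w: "w \<in> succs i k P t S v"
        then have aw: "active i k P t S w" and pw: "prefix v w"
          and mn: "\<not> (\<exists>w'. active i k P t S w' \<and> prefix v w' \<and> strict_prefix w' w)"
          unfolding succs_def by blast+
        have p0: "prefix (v @ [0]) w" using key[OF aw pw] .
        have "\<not> (\<exists>w'. active i k P t S w' \<and> prefix (v @ [0]) w' \<and> strict_prefix w' w)"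
        proof
          assume "\<exists>w'. active i k P t S w' \<and> prefix (v @ [0]) w' \<and> strict_prefix w' w"
          then obtain w' where "active i k P t S w'" "prefix (v @ [0]) w'" "strict_prefix w' w" by blast
          moreover have "prefix v w'" using prefix_order.trans[OF pv0 \<open>prefix (v @ [0]) w'\<close>] .
          ultimately show False using mn by blast
        qed
        then show "w \<in> succs i k P t S (v @ [0])" unfolding succs_def using aw p0 by blast
      qed
      show "succs i k P t S (v @ [0]) \<subseteq> succs i k P t S v"
      proof
        fix w assume w: "w \<in> succs i k P t S (v @ [0])"
        then have aw: "active i k P t S w" and pw: "prefix (v @ [0]) w"
          and mn: "\<not> (\<exists>w'. active i k P t S w' \<and> prefix (v @ [0]) w' \<and> strict_prefix w' w)"
          unfolding succs_def by blast+
        have "prefix v w" using prefix_order.trans[OF pv0 pw] .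
        moreover have "\<not> (\<exists>w'. active i k P t S w' \<and> prefix v w' \<and> strict_prefix w' w)"
        proof
          assume "\<exists>w'. active i k P t S w' \<and> prefix v w' \<and> strict_prefix w' w"
          then obtain w' where w': "active i k P t S w'" "prefix v w'" "strict_prefix w' w" by blast
          have "prefix (v @ [0]) w'" using key[OF w'(1) w'(2)] .
          then show False using mn w' by blast
        qed
        ultimately show "w \<in> succs i k P t S v" unfolding succs_def using aw by blast
      qed
    qed
    then show ?thesis using False by simp
  qed
qed

lemma act_shift:
  assumes "active i k P t S (u @ w)"
  shows "active i k P (subtree t u) (restr S u) w"
proof -
  obtain j where a: "u @ w \<in> S" "t (u @ w) = Some (Prio j)" "losing i k P j"
    "\<forall>x. strict_prefix x (u @ w) \<longrightarrow> t x \<noteq> Some Tilde \<and> (\<forall>j'<j. t x \<noteq> Some (Prio j'))"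
    using assms unfolding active_def by blast
  have "\<forall>v. strict_prefix v w \<longrightarrow> t (u @ v) \<noteq> Some Tilde \<and> (\<forall>j'<j. t (u @ v) \<noteq> Some (Prio j'))"
    using a(4) sp_app_left by blast
  then show ?thesis unfolding active_sub_iff using a by blast
qed

lemma act_back:
  assumes act: "active i k P (subtree t u) (restr S u) w" and lab: "t (u @ w) = Some (Prio j2)"
    and le: "j2 \<le> j"
    and pre: "\<forall>w. strict_prefix w u \<longrightarrow> t w \<noteq> Some Tilde \<and> (\<forall>j'<j. t w \<noteq> Some (Prio j'))"
  shows "active i k P t S (u @ w)"
proof -
  obtain j3 where a: "u @ w \<in> S" "t (u @ w) = Some (Prio j3)" "losing i k P j3"
    "\<forall>v. strict_prefix v w \<longrightarrow> t (u @ v) \<noteq> Some Tilde \<and> (\<forall>j'<j3. t (u @ v) \<noteq> Some (Prio j'))"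
    using act unfolding active_sub_iff by blast
  have j3: "j3 = j2" using a(2) lab by simp
  have "t x \<noteq> Some Tilde \<and> (\<forall>j'<j3. t x \<noteq> Some (Prio j'))" if x: "strict_prefix x (u @ w)" for x
  proof -
    have "strict_prefix x u \<or> (\<exists>v. x = u @ v \<and> strict_prefix v w)" using x by (rule sp_append_split)
    then show ?thesis
    proof
      assume "strict_prefix x u"
      then show ?thesis using pre j3 le by fastforce
    next
      assume "\<exists>v. x = u @ v \<and> strict_prefix v w"
      then show ?thesis using a(4) by blast
    qed
  qed
  then show ?thesis unfolding active_def using a by blast
qed

lemma succs_decomp:
  "succs i k P t S (u @ w) = (\<Union>a\<in>succs i k P (subtree t u) (restr S u) w. succs i k P t S (u @ a))"
  (is "?L = ?R")
proof
  let ?A' = "active i k P (subtree t u) (restr S u)"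
  let ?A = "active i k P t S"
  show "?L \<subseteq> ?R"
  proof
    fix b assume b: "b \<in> ?L"
    then have ab: "?A b" and pb: "prefix (u @ w) b"
      and mn: "\<not> (\<exists>c. ?A c \<and> prefix (u @ w) c \<and> strict_prefix c b)"
      unfolding succs_def by blast+
    obtain r where "b = (u @ w) @ r" using pb by (rule prefixE)
    then have br: "b = u @ (w @ r)" by simp
    define b' where "b' = w @ r"
    have ab': "?A' b'" using ab br b'_def act_shift by blast
    define Q where "Q = {a. ?A' a \<and> prefix w a \<and> prefix a b'}"
    have "b' \<in> Q" using ab' Q_def b'_def by simp
    then obtain a where aQ: "a \<in> Q" and amin: "\<forall>y. y \<in> Q \<longrightarrow> length a \<le> length y"
      using ex_has_least_nat[of "\<lambda>x. x \<in> Q" b' length] by blast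
    have a1: "?A' a" "prefix w a" "prefix a b'" using aQ Q_def by blast+
    have "a \<in> succs i k P (subtree t u) (restr S u) w"
    proof -
      have "\<not> (\<exists>c. ?A' c \<and> prefix w c \<and> strict_prefix c a)"
      proof
        assume "\<exists>c. ?A' c \<and> prefix w c \<and> strict_prefix c a"
        then obtain c where c: "?A' c" "prefix w c" "strict_prefix c a" by blast
        have "prefix c b'" using prefix_order.trans[OF prefix_order.less_imp_le[OF c(3)] a1(3)] .
        then have "c \<in> Q" using c Q_def by blast
        then have "length a \<le> length c" using amin by blast
        moreover have "length c < length a" using c(3) by (rule prefix_length_less)
        ultimately show False by simp
      qed
      then show ?thesis unfolding succs_def using a1 by blast
    qed
    moreover have "b \<in> succs i k P t S (u @ a)"
    proof -
      have pab: "prefix (u @ a) b" using a1(3) br b'_def by simp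
      have uwa: "prefix (u @ w) (u @ a)" using a1(2) by simp
      have "\<not> (\<exists>c. ?A c \<and> prefix (u @ a) c \<and> strict_prefix c b)"
      proof
        assume "\<exists>c. ?A c \<and> prefix (u @ a) c \<and> strict_prefix c b"
        then obtain c where "?A c" "prefix (u @ a) c" "strict_prefix c b" by blast
        moreover have "prefix (u @ w) c" using prefix_order.trans[OF uwa \<open>prefix (u @ a) c\<close>] .
        ultimately show False using mn by blast
      qed
      then show ?thesis unfolding succs_def using ab pab by blast
    qed
    ultimately show "b \<in> ?R" by blast
  qed
  show "?R \<subseteq> ?L"
  proof
    fix b assume "b \<in> ?R"
    then obtain a where a: "a \<in> succs i k P (subtree t u) (restr S u) w" and b: "b \<in> succs i k P t S (u @ a)"
      by blast
    have a1: "prefix w a" and amn: "\<not> (\<exists>c. ?A' c \<and> prefix w c \<and> strict_prefix c a)"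
      using a unfolding succs_def by blast+
    have ab: "?A b" and pab: "prefix (u @ a) b"
      and bmn: "\<not> (\<exists>c. ?A c \<and> prefix (u @ a) c \<and> strict_prefix c b)"
      using b unfolding succs_def by blast+
    have "prefix (u @ w) (u @ a)" using a1 by simp
    then have pwb: "prefix (u @ w) b" using pab by (rule prefix_order.trans)
    have "\<not> (\<exists>c. ?A c \<and> prefix (u @ w) c \<and> strict_prefix c b)"
    proof
      assume "\<exists>c. ?A c \<and> prefix (u @ w) c \<and> strict_prefix c b"
      then obtain c where c: "?A c" "prefix (u @ w) c" "strict_prefix c b" by blast
      obtain r where "c = (u @ w) @ r" using c(2) by (rule prefixE)
      then have cr: "c = u @ (w @ r)" by simp
      have ac': "?A' (w @ r)" using c(1) cr act_shift by blast
      have "prefix c b" using c(3) by (rule prefix_order.less_imp_le)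
      then have "prefix c (u @ a) \<or> prefix (u @ a) c" using pab by (rule prefix_same_cases)
      then show False
      proof
        assume "prefix (u @ a) c"
        then show False using bmn c by blast
      next
        assume pc: "prefix c (u @ a)"
        show False
        proof (cases "c = u @ a")
          case True then show False using bmn c by blast
        next
          case False
          then have "strict_prefix (u @ (w @ r)) (u @ a)" using pc cr by (simp add: prefix_order.less_le)
          then have "strict_prefix (w @ r) a" by (simp only: sp_app_left)
          then show False using amn ac' by fastforce
        qed
      qed
    qed
    then show "b \<in> ?L" unfolding succs_def using ab pwb by blast
  qed
qed



theorem mainTheorem11:
  fixes i k j :: nat and P :: player and t :: tree and S :: "nat list set" and u :: "nat list"
  assumes ord_nomax: "\<forall>x::'o::wellorder. \<exists>y. x < y"
    and ord_ctbl_bdd: "\<forall>X::'o set. countable X \<longrightarrow> (\<exists>b. \<forall>x\<in>X. x \<le> b)"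
    and ik: "i < k"
    and tree: "is_tree i k t"
    and wf: "well_formed t"
    and win: "winning_strategy k P t S"
    and uS: "u \<in> S"
    and jl: "losing i k P j"
    and pre: "\<forall>w. strict_prefix w u \<longrightarrow> t w \<noteq> Some Tilde \<and> (\<forall>j'<j. t w \<noteq> Some (Prio j'))"
  shows "trunc i k P j (sval i k P (subtree t u) (restr S u) [] :: 'o list)
         = trunc i k P j (sval i k P t S u :: 'o list)"
proof -
  let ?t' = "subtree t u" and ?S' = "restr S u"
  let ?s = "sval i k P t S :: nat list \<Rightarrow> 'o list"
  let ?s' = "sval i k P ?t' ?S' :: nat list \<Rightarrow> 'o list"
  let ?A = "active i k P t S" and ?A' = "active i k P ?t' ?S'"
  let ?m = "tlen i k P"
  have strat: "strategy P t S" using win by (rule ws_strat)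
  have sub: "S \<subseteq> tdom t" using strat by (rule strat_sub)
  have nt: "\<forall>w. strict_prefix w u \<longrightarrow> t w \<noteq> Some Tilde" using pre by blast
  have wf': "wf {(x, y). gg i k P ?t' ?S' y x}" using gg_wf[OF win uS nt] .
  have eS: "[] \<in> S" using strat unfolding strategy_def by blast
  have wf0: "wf {(x, y). gg i k P t S y x}" using gg_wf[OF win eS, of i] by simp
  have ch': "\<forall>v. ?A' v \<longrightarrow> v @ [0] \<in> ?S'" using child_sub[OF tree strat] by blast
  have ch: "\<forall>v. ?A v \<longrightarrow> v @ [0] \<in> S" using child_sub[OF tree strat, of "[]"] by simp
  have pc': "\<forall>x y. x \<in> ?S' \<longrightarrow> prefix y x \<longrightarrow> y \<in> ?S'" using pc_sub[OF strat] .
  have pc: "\<forall>x y. x \<in> S \<longrightarrow> prefix y x \<longrightarrow> y \<in> S" using pc_sub[OF strat, of "[]"] by simp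
  have len': "\<And>v. length (?s' v) = ?m" using sval_len[OF ord_ctbl_bdd ord_nomax wf' ch' pc'] .
  have len: "\<And>v. length (?s v) = ?m" using sval_len[OF ord_ctbl_bdd ord_nomax wf0 ch pc] .
  define n where "n = lpos i k P j + 1"
  have nle: "n \<le> ?m" using lpos_lt[OF jl] n_def by simp
  have lubs: "islub ?m (?s ` X) (tsup ?m (?s ` X))" for X
    using tsup_lub[OF ord_ctbl_bdd ord_nomax, of "?s ` X" ?m] len by simp
  have lubs': "islub ?m (?s' ` X) (tsup ?m (?s' ` X))" for X
    using tsup_lub[OF ord_ctbl_bdd ord_nomax, of "?s' ` X" ?m] len' by simp
  have ltake: "islub n (take n ` Y) (take n z)" if "islub ?m Y z" "\<forall>y\<in>Y. length y = ?m" "countable Y" for Y and z :: "'o list"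
    using lub_take[OF ord_ctbl_bdd ord_nomax that(3) that(2) nle that(1)] .
  have main: "take n (?s' w) = take n (?s (u @ w))" for w
    using wf'
  proof (induction w rule: wf_induct_rule)
    case (less w)
    show ?case
    proof (cases "?A' w")
      case A: True
      obtain j2 where lab: "t (u @ w) = Some (Prio j2)" "losing i k P j2"
        using A unfolding active_sub_iff by blast
      have lab': "?t' w = Some (Prio j2)" using lab by (simp add: subtree_def)
      have cw: "w @ [0] \<in> ?S'" using ch' A by blast
      have wS': "w \<in> ?S'" using A active_def by blast
      have "gg i k P ?t' ?S' w (w @ [0])" unfolding gg_def
        using wS' cw A by (auto simp: prefix_order.less_le)
      then have IH: "take n (?s' (w @ [0])) = take n (?s (u @ (w @ [0])))" using less by blast
      have e': "?s' w = stepf i k P j2 (?s' (w @ [0]))" by (rule sval_act[OF wf' A cw lab'])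
      show ?thesis
      proof (cases "?A (u @ w)")
        case True
        have "(u @ w) @ [0] \<in> S" using ch True by blast
        then have "?s (u @ w) = stepf i k P j2 (?s ((u @ w) @ [0]))"
          by (rule sval_act[OF wf0 True _ lab(1)])
        then show ?thesis using e' IH take_stepf_cong by simp
      next
        case False
        have "\<not> j2 \<le> j" using act_back[OF A lab(1) _ pre] False by blast
        then have "lpos i k P j < lpos i k P j2" using lpos_strict[OF jl lab(2)] by simp
        then have nl: "n \<le> lpos i k P j2" using n_def by simp
        have "lpos i k P j2 < length (?s' (w @ [0]))" using lpos_lt[OF lab(2)] len'[of "w @ [0]"] by simp
        then have "lpos i k P j2 \<le> length (?s' (w @ [0]))" by simp
        then have "take n (?s' w) = take n (?s' (w @ [0]))"
          unfolding e' by (rule take_stepf_high[OF nl])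
        also have "\<dots> = take n (?s (u @ (w @ [0])))" by (rule IH)
        also have "?s (u @ (w @ [0])) = ?s (u @ w)"
        proof -
          have su: "succs i k P t S (u @ w) = (if ?A ((u @ w) @ [0]) then {(u @ w) @ [0]} else succs i k P t S ((u @ w) @ [0]))"
            by (rule succs_unary[OF tree sub lab(1) False])
          have e0: "?s (u @ w) = tsup ?m (?s ` succs i k P t S (u @ w))"
            by (rule sval_nact[OF wf0 False pc])
          show ?thesis
          proof (cases "?A ((u @ w) @ [0])")
            case True
            then have "?s (u @ w) = tsup ?m {?s ((u @ w) @ [0])}" using e0 su by simp
            also have "\<dots> = ?s ((u @ w) @ [0])"
              by (rule tsup_eq) (simp_all add: len lub_single)
            finally show ?thesis by simp
          next
            case False
            have "?s ((u @ w) @ [0]) = tsup ?m (?s ` succs i k P t S ((u @ w) @ [0]))"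
              by (rule sval_nact[OF wf0 False pc])
            then show ?thesis using e0 su False by simp
          qed
        qed
        finally show ?thesis .
      qed
    next
      case B: False
      have nA: "\<not> ?A (u @ w)" using B act_shift by blast
      let ?X' = "succs i k P ?t' ?S' w"
      have e': "?s' w = tsup ?m (?s' ` ?X')" by (rule sval_nact[OF wf' B pc'])
      have l1: "islub n (take n ` ?s' ` ?X') (take n (?s' w))"
        unfolding e' using ltake[OF lubs'[of ?X']] len' by simp
      have IH: "take n (?s' a) = take n (?s (u @ a))" if "a \<in> ?X'" for a
        using less succs_gg[OF pc' B that] by blast
      have img: "take n ` ?s' ` ?X' = (\<lambda>a. take n (?s (u @ a))) ` ?X'"
        using IH by (auto simp: image_image intro!: image_cong)
      have each: "islub n (take n ` ?s ` succs i k P t S (u @ a)) (take n (?s (u @ a)))" for a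
      proof -
        have "islub ?m (?s ` succs i k P t S (u @ a)) (?s (u @ a))"
        proof (cases "?A (u @ a)")
          case True
          then show ?thesis using succs_act[OF True] lub_single[OF len] by simp
        next
          case False
          have e: "?s (u @ a) = tsup ?m (?s ` succs i k P t S (u @ a))"
            by (rule sval_nact[OF wf0 False pc])
          show ?thesis unfolding e by (rule lubs)
        qed
        then show ?thesis using ltake len by simp
      qed
      have "islub n (\<Union>a\<in>?X'. take n ` ?s ` succs i k P t S (u @ a)) (take n (?s' w))"
        by (rule lub_union) (use each l1 img in auto)
      moreover have "(\<Union>a\<in>?X'. take n ` ?s ` succs i k P t S (u @ a)) = take n ` ?s ` succs i k P t S (u @ w)"
        unfolding succs_decomp[of i k P t S u w] by blast
      ultimately have l2: "islub n (take n ` ?s ` succs i k P t S (u @ w)) (take n (?s' w))" by simp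
      have e: "?s (u @ w) = tsup ?m (?s ` succs i k P t S (u @ w))"
        by (rule sval_nact[OF wf0 nA pc])
      have "islub n (take n ` ?s ` succs i k P t S (u @ w)) (take n (?s (u @ w)))"
        unfolding e using ltake[OF lubs[of "succs i k P t S (u @ w)"]] len by simp
      then show ?thesis using l2 lub_unique by blast
    qed
  qed
  show ?thesis unfolding trunc_def using main[of "[]"] n_def by simp
qed


end
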